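(* Let $d\geq 3$ and let $U=(u_{ij})\in\mathcal{U}_d(\mathbb{C})$ be arbitrary. Suppose $M\in\mathbb{N}$ is such that every $V\in\mathcal{U}_d(\mathbb{C})$ can be written as $V=D_{2M}U^\dagger D_{2M-1}U\cdots D_2U^\dagger D_1U$ with $D_1,\dots,D_{2M}\in\mathcal{DU}_d(\mathbb{C})$ (i.e., generated by $N=2M$ alternated operations from $\mathcal{F}_A=\mathcal{DU}_d(\mathbb{C})$ and $\mathcal{F}_B=\{U^\dagger DU:D\in\mathcal{DU}_d(\mathbb{C})\}$). Then $$N=2M\geq\frac{2\log(d-1)}{\log\big((d-2)c_U+1\big)},\qquad\text{where}\quad c_U=\max_{a,b\in\{1,\dots,d\},\,a\neq b}\sum_{j=1}^d|\bar{u}_{ja}||u_{jb}|=\max_{a\neq b}\langle a|X_U^TX_U|b\rangle,$$ and $X_U$ is the matrix with entries $[X_U]_{ij}=|u_{ij}|$.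
   Context: $\mathcal{U}_d(\mathbb{C})$ denotes the group of $d\times d$ unitary matrices and $\mathcal{DU}_d(\mathbb{C})$ its subgroup of diagonal unitary matrices; $\{|i\rangle\}$ is the computational basis. *)

theory Defs
  imports "Jordan_Normal_Form.Schur_Decomposition"
begin

definition unitary_mat :: "nat \<Rightarrow> complex mat \<Rightarrow> bool" where
  "unitary_mat d U \<longleftrightarrow> U \<in> carrier_mat d d \<and> mat_adjoint U * U = 1\<^sub>m d"

definition diag_unitary_mat :: "nat \<Rightarrow> complex mat \<Rightarrow> bool" where
  "diag_unitary_mat d D \<longleftrightarrow> unitary_mat d D \<and> diagonal_mat D"

fun alt_prod :: "nat \<Rightarrow> complex mat \<Rightarrow> (nat \<Rightarrow> complex mat) \<Rightarrow> nat \<Rightarrow> complex mat" where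
  "alt_prod d U D 0 = 1\<^sub>m d"
| "alt_prod d U D (Suc k) =
     D (2 * k + 2) * mat_adjoint U * D (2 * k + 1) * U * alt_prod d U D k"

definition c_U :: "nat \<Rightarrow> complex mat \<Rightarrow> real" where
  "c_U d U = Max {(\<Sum>j<d. cmod (cnj (U $$ (j, a))) * cmod (U $$ (j, b))) | a b.
                   a < d \<and> b < d \<and> a \<noteq> b}"

end

theory Submission
  imports Defs
begin

lemma adj_dims[simp]: "dim_row (mat_adjoint A) = dim_col A" "dim_col (mat_adjoint A) = dim_row A"
  unfolding mat_adjoint_def by (auto simp: mat_of_rows_def)

lemma adj_carrier: "A \<in> carrier_mat n m \<Longrightarrow> mat_adjoint A \<in> carrier_mat m n"
  by auto

lemma adj_index'[simp]: "i < dim_col A \<Longrightarrow> j < dim_row A \<Longrightarrow>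
   mat_adjoint A $$ (i,j) = cnj (A $$ (j,i))"
  unfolding mat_adjoint_def by (auto simp: mat_of_rows_index)

lemma adj_index: "(A::complex mat) \<in> carrier_mat n m \<Longrightarrow> i < m \<Longrightarrow> j < n \<Longrightarrow>
   mat_adjoint A $$ (i,j) = cnj (A $$ (j,i))"
  unfolding mat_adjoint_def by (auto simp: mat_of_rows_index)

lemma adj_adj: "mat_adjoint (mat_adjoint (A::complex mat)) = A"
  by (rule eq_matI) auto

lemma adj_mult: assumes "(A::complex mat) \<in> carrier_mat n m" "B \<in> carrier_mat m k"
  shows "mat_adjoint (A * B) = mat_adjoint B * mat_adjoint A"
proof (rule eq_matI)
  have AB: "A * B \<in> carrier_mat n k" using assms by auto
  show "dim_row (mat_adjoint (A * B)) = dim_row (mat_adjoint B * mat_adjoint A)"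
    using adj_carrier[OF AB] adj_carrier[OF assms(2)] by auto
  show "dim_col (mat_adjoint (A * B)) = dim_col (mat_adjoint B * mat_adjoint A)"
    using adj_carrier[OF AB] adj_carrier[OF assms(1)] by auto
  fix i j assume i: "i < dim_row (mat_adjoint B * mat_adjoint A)" and j: "j < dim_col (mat_adjoint B * mat_adjoint A)"
  have i': "i < k" and j': "j < n" using i j adj_carrier[OF assms(2)] adj_carrier[OF assms(1)] by auto
  show "mat_adjoint (A * B) $$ (i, j) = (mat_adjoint B * mat_adjoint A) $$ (i, j)"
    using i' j' assms adj_carrier[OF assms(2)] adj_carrier[OF assms(1)]
    by (simp add: scalar_prod_def mult.commute)
qed

lemma unitary_carrier: "unitary_mat d U \<Longrightarrow> U \<in> carrier_mat d d"
  by (simp add: unitary_mat_def)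

lemma unitary_right: assumes "unitary_mat d U" shows "U * mat_adjoint U = 1\<^sub>m d"
  using assms mat_mult_left_right_inverse[of "mat_adjoint U" d U] adj_carrier[of U d d]
  unfolding unitary_mat_def by auto

lemma unitary_mult: assumes "unitary_mat d A" "unitary_mat d B" shows "unitary_mat d (A * B)"
proof -
  have A: "A \<in> carrier_mat d d" and B: "B \<in> carrier_mat d d" using assms unitary_carrier by auto
  have aA: "mat_adjoint A \<in> carrier_mat d d" and aB: "mat_adjoint B \<in> carrier_mat d d"
    using adj_carrier A B by auto
  have "mat_adjoint (A * B) * (A * B) = mat_adjoint B * (mat_adjoint A * A) * B"
    using adj_mult[OF A B] A B aA aB by (simp add: assoc_mult_mat[of _ d d _ d _ d])
  also have "\<dots> = 1\<^sub>m d" using assms B aB unfolding unitary_mat_def by simp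
  finally show ?thesis using A B unfolding unitary_mat_def by auto
qed

lemma unitary_adj: assumes "unitary_mat d A" shows "unitary_mat d (mat_adjoint A)"
  using unitary_right[OF assms] adj_adj[of A] adj_carrier[of A d d] assms
  unfolding unitary_mat_def by auto

lemma unitary_one: "unitary_mat d (1\<^sub>m d)"
proof -
  have "mat_adjoint (1\<^sub>m d) = (1\<^sub>m d :: complex mat)"
    by (rule eq_matI) auto
  then show ?thesis unfolding unitary_mat_def by auto
qed

lemma unitary_col: assumes "unitary_mat d U" "j < d"
  shows "(\<Sum>i<d. (cmod (U $$ (i,j)))\<^sup>2) = 1"
proof -
  have U: "U \<in> carrier_mat d d" using assms unitary_carrier by auto
  have "(mat_adjoint U * U) $$ (j,j) = 1" using assms unfolding unitary_mat_def by simp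
  hence "(\<Sum>i<d. cnj (U $$ (i,j)) * U $$ (i,j)) = 1"
    using U adj_carrier[OF U] assms(2)
    by (simp add: scalar_prod_def atLeast0LessThan)
  hence "(\<Sum>i<d. complex_of_real ((cmod (U $$ (i,j)))\<^sup>2)) = 1"
    by (simp add: complex_norm_square mult.commute del: of_real_power)
  hence "complex_of_real (\<Sum>i<d. (cmod (U $$ (i,j)))\<^sup>2) = 1" by simp
  thus ?thesis using of_real_eq_1_iff by blast
qed

lemma unitary_row: assumes "unitary_mat d U" "i < d"
  shows "(\<Sum>j<d. (cmod (U $$ (i,j)))\<^sup>2) = 1"
proof -
  have U: "U \<in> carrier_mat d d" using assms unitary_carrier by auto
  have "(\<Sum>j<d. (cmod (mat_adjoint U $$ (j,i)))\<^sup>2) = 1"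
    using unitary_col[OF unitary_adj[OF assms(1)] assms(2)] .
  moreover have "(\<Sum>j<d. (cmod (mat_adjoint U $$ (j,i)))\<^sup>2) = (\<Sum>j<d. (cmod (U $$ (i,j)))\<^sup>2)"
    by (rule sum.cong) (use U assms(2) in auto)
  ultimately show ?thesis by simp
qed

lemma unitary_entry_le1: assumes "unitary_mat d U" "i < d" "j < d"
  shows "cmod (U $$ (i,j)) \<le> 1"
proof -
  have "(cmod (U $$ (i,j)))\<^sup>2 \<le> (\<Sum>i<d. (cmod (U $$ (i,j)))\<^sup>2)"
    by (rule member_le_sum) (use assms in auto)
  hence "(cmod (U $$ (i,j)))\<^sup>2 \<le> 1" using unitary_col[OF assms(1,3)] by simp
  thus ?thesis by (simp add: power_le_one_iff abs_square_le_1)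
qed

lemma mult_entry: assumes "A \<in> carrier_mat n m" "B \<in> carrier_mat m k" "i < n" "j < k"
  shows "(A * B) $$ (i,j) = (\<Sum>l<m. A $$ (i,l) * B $$ (l,j))"
  using assms by (auto simp: scalar_prod_def atLeast0LessThan intro!: sum.cong)

lemma diag_left: assumes "D \<in> carrier_mat d d" "diagonal_mat D" "A \<in> carrier_mat d n" "i < d" "j < n"
  shows "(D * A) $$ (i,j) = D $$ (i,i) * A $$ (i,j)"
proof -
  have "(D * A) $$ (i,j) = (\<Sum>l<d. D $$ (i,l) * A $$ (l,j))" by (rule mult_entry[OF assms(1,3-5)])
  also have "\<dots> = (\<Sum>l<d. if l = i then D $$ (i,i) * A $$ (i,j) else 0)"
    by (rule sum.cong) (use assms in \<open>auto simp: diagonal_mat_def\<close>)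
  also have "\<dots> = D $$ (i,i) * A $$ (i,j)" using assms(4) by simp
  finally show ?thesis .
qed

lemma diag_right: assumes "D \<in> carrier_mat d d" "diagonal_mat D" "A \<in> carrier_mat n d" "i < n" "j < d"
  shows "(A * D) $$ (i,j) = A $$ (i,j) * D $$ (j,j)"
proof -
  have "(A * D) $$ (i,j) = (\<Sum>l<d. A $$ (i,l) * D $$ (l,j))" by (rule mult_entry[OF assms(3,1,4,5)])
  also have "\<dots> = (\<Sum>l<d. if l = j then A $$ (i,j) * D $$ (j,j) else 0)"
    by (rule sum.cong) (use assms in \<open>auto simp: diagonal_mat_def\<close>)
  also have "\<dots> = A $$ (i,j) * D $$ (j,j)" using assms(5) by simp
  finally show ?thesis .
qed

lemma diag_unitary_facts: assumes "diag_unitary_mat d D"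
  shows "D \<in> carrier_mat d d" "diagonal_mat D" "unitary_mat d D" "\<And>i. i < d \<Longrightarrow> cmod (D $$ (i,i)) \<le> 1"
  using assms unitary_entry_le1 unfolding diag_unitary_mat_def unitary_mat_def by auto

definition Hf :: "complex mat \<Rightarrow> complex mat \<Rightarrow> complex mat \<Rightarrow> complex mat" where
  "Hf U D1 D2 = D2 * mat_adjoint U * D1 * U"

lemma Hf_unitary: assumes "unitary_mat d U" "diag_unitary_mat d D1" "diag_unitary_mat d D2"
  shows "unitary_mat d (Hf U D1 D2)"
  unfolding Hf_def using assms diag_unitary_facts unitary_mult unitary_adj by metis

lemma Hf_entry: assumes "unitary_mat d U" "diag_unitary_mat d D1" "diag_unitary_mat d D2" "j < d" "l < d"
  shows "cmod (Hf U D1 D2 $$ (j,l)) \<le> (\<Sum>i<d. cmod (U $$ (i,j)) * cmod (U $$ (i,l)))"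
proof -
  note f1 = diag_unitary_facts[OF assms(2)] and f2 = diag_unitary_facts[OF assms(3)]
  have U: "U \<in> carrier_mat d d" using assms(1) unitary_carrier by auto
  have aU: "mat_adjoint U \<in> carrier_mat d d" using U by auto
  have e1: "(D2 * mat_adjoint U) $$ (j,i) = D2 $$ (j,j) * cnj (U $$ (i,j))" if "i < d" for i
    using diag_left[OF f2(1,2) aU assms(4) that] U that assms(4) by simp
  have e2: "(D2 * mat_adjoint U * D1) $$ (j,i) = D2 $$ (j,j) * cnj (U $$ (i,j)) * D1 $$ (i,i)" if "i < d" for i
    using diag_right[OF f1(1,2) _ assms(4) that, of "D2 * mat_adjoint U"] e1[OF that] f2(1) aU by simp
  have "Hf U D1 D2 $$ (j,l) = (\<Sum>i<d. (D2 * mat_adjoint U * D1) $$ (j,i) * U $$ (i,l))"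
    unfolding Hf_def by (rule mult_entry[of _ d d]) (use f1(1) f2(1) aU U assms(4,5) in auto)
  also have "\<dots> = (\<Sum>i<d. D2 $$ (j,j) * cnj (U $$ (i,j)) * D1 $$ (i,i) * U $$ (i,l))"
    by (rule sum.cong) (auto simp: e2)
  finally have "cmod (Hf U D1 D2 $$ (j,l)) \<le> (\<Sum>i<d. cmod (D2 $$ (j,j) * cnj (U $$ (i,j)) * D1 $$ (i,i) * U $$ (i,l)))"
    by (simp add: norm_sum)
  also have "\<dots> \<le> (\<Sum>i<d. cmod (U $$ (i,j)) * cmod (U $$ (i,l)))"
  proof (rule sum_mono)
    fix i assume i: "i \<in> {..<d}"
    have a: "cmod (D2 $$ (j,j)) \<le> 1" using f2(4) assms(4) by auto
    have b: "cmod (D1 $$ (i,i)) \<le> 1" using f1(4) i by auto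
    have "cmod (D2 $$ (j,j) * cnj (U $$ (i,j)) * D1 $$ (i,i) * U $$ (i,l))
      = cmod (D2 $$ (j,j)) * cmod (D1 $$ (i,i)) * (cmod (U $$ (i,j)) * cmod (U $$ (i,l)))"
      by (simp add: norm_mult)
    also have "\<dots> \<le> 1 * 1 * (cmod (U $$ (i,j)) * cmod (U $$ (i,l)))"
      by (intro mult_right_mono mult_mono a b) auto
    finally show "cmod (D2 $$ (j,j) * cnj (U $$ (i,j)) * D1 $$ (i,i) * U $$ (i,l)) \<le> cmod (U $$ (i,j)) * cmod (U $$ (i,l))" by simp
  qed
  finally show ?thesis .
qed

lemma cU_ge: assumes "a < d" "b < d" "a \<noteq> b"
  shows "(\<Sum>i<d. cmod (U $$ (i,a)) * cmod (U $$ (i,b))) \<le> c_U d U"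
proof -
  let ?f = "\<lambda>a b. (\<Sum>j<d. cmod (cnj (U $$ (j, a))) * cmod (U $$ (j, b)))"
  let ?S = "{?f a b | a b. a < d \<and> b < d \<and> a \<noteq> b}"
  have "?S \<subseteq> (\<lambda>(a,b). ?f a b) ` ({..<d} \<times> {..<d})" by auto
  hence fin: "finite ?S" by (rule finite_subset) auto
  have "?f a b \<in> ?S" using assms by blast
  hence "?f a b \<le> Max ?S" using fin by (rule Max_ge[rotated])
  thus ?thesis unfolding c_U_def by simp
qed

lemma cU_nonneg: assumes "d \<ge> 2" shows "0 \<le> c_U d U"
proof -
  have "0 \<le> (\<Sum>i<d. cmod (U $$ (i,0)) * cmod (U $$ (i,1)))" by (intro sum_nonneg) auto
  also have "\<dots> \<le> c_U d U" using cU_ge[of 0 d 1 U] assms by auto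
  finally show ?thesis .
qed

lemma Hf_off: assumes "unitary_mat d U" "diag_unitary_mat d D1" "diag_unitary_mat d D2" "j < d" "l < d" "j \<noteq> l"
  shows "cmod (Hf U D1 D2 $$ (j,l)) \<le> c_U d U"
  using Hf_entry[OF assms(1-5)] cU_ge[OF assms(4-6), of U] by linarith

lemma Hf_diag: assumes "unitary_mat d U" "diag_unitary_mat d D1" "diag_unitary_mat d D2" "j < d"
  shows "cmod (Hf U D1 D2 $$ (j,j)) \<le> 1"
  using Hf_entry[OF assms(1-4) assms(4)] unitary_col[OF assms(1,4)] by (simp add: power2_eq_square)

lemma alt_prod_Suc': "alt_prod d U D (Suc k) = Hf U (D (2*k+1)) (D (2*k+2)) * alt_prod d U D k"
  by (simp add: Hf_def)

lemma alt_prod_unitary: assumes "unitary_mat d U" "\<forall>i\<in>{1..2*k}. diag_unitary_mat d (D i)"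
  shows "unitary_mat d (alt_prod d U D k)"
  using assms(2)
proof (induction k)
  case 0 thus ?case by (simp add: unitary_one)
next
  case (Suc k)
  have IH: "unitary_mat d (alt_prod d U D k)" using Suc by auto
  have "diag_unitary_mat d (D (2*k+1))" "diag_unitary_mat d (D (2*k+2))" using Suc.prems by auto
  thus ?case unfolding alt_prod_Suc' using Hf_unitary[OF assms(1)] IH unitary_mult by blast
qed

lemma alg_step: assumes "(e::real) > 0"
  shows "(e+2)*(c*((X-1)/e)) + ((X-1)/e - c*((X-1)/e)) + (c - c*((X-1)/e)) = ((e*c+1)*X - 1)/e"
  using assms by (simp add: field_simps)

lemma alt_prod_off: assumes "unitary_mat d U" "\<forall>i\<in>{1..2*k}. diag_unitary_mat d (D i)" "d \<ge> 3"
    "j < d" "b < d" "j \<noteq> b"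
  shows "cmod (alt_prod d U D k $$ (j,b)) \<le> (((real d - 2) * c_U d U + 1) ^ k - 1) / (real d - 2)"
  using assms(2,4-6)
proof (induction k arbitrary: j b)
  case 0 thus ?case by simp
next
  case (Suc k)
  let ?c = "c_U d U" let ?x = "(real d - 2) * c_U d U + 1"
  define \<beta> where "\<beta> = (?x ^ k - 1) / (real d - 2)"
  have c0: "0 \<le> ?c" using cU_nonneg[of d U] assms(3) by simp
  have d2: "real d - 2 > 0" using assms(3) by simp
  have x1: "1 \<le> ?x" using c0 d2 by simp
  have b0: "0 \<le> \<beta>" unfolding \<beta>_def using x1 d2 by (simp add: one_le_power)
  have hyp: "\<forall>i\<in>{1..2*k}. diag_unitary_mat d (D i)" using Suc.prems by auto
  have D1: "diag_unitary_mat d (D (2*k+1))" and D2: "diag_unitary_mat d (D (2*k+2))" using Suc.prems by auto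
  let ?H = "Hf U (D (2*k+1)) (D (2*k+2))" let ?Q = "alt_prod d U D k"
  have Hu: "unitary_mat d ?H" using Hf_unitary[OF assms(1) D1 D2] .
  have Qu: "unitary_mat d ?Q" using alt_prod_unitary[OF assms(1) hyp] .
  have IH: "\<And>j b. j < d \<Longrightarrow> b < d \<Longrightarrow> j \<noteq> b \<Longrightarrow> cmod (?Q $$ (j,b)) \<le> \<beta>"
    using Suc.IH[OF hyp] unfolding \<beta>_def by blast
  have "alt_prod d U D (Suc k) $$ (j,b) = (\<Sum>l<d. ?H $$ (j,l) * ?Q $$ (l,b))"
    unfolding alt_prod_Suc' by (rule mult_entry) (use Hu Qu unitary_carrier Suc.prems in auto)
  hence "cmod (alt_prod d U D (Suc k) $$ (j,b)) \<le> (\<Sum>l<d. cmod (?H $$ (j,l) * ?Q $$ (l,b)))"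
    by (metis norm_sum)
  also have "\<dots> = (\<Sum>l<d. cmod (?H $$ (j,l)) * cmod (?Q $$ (l,b)))" by (simp add: norm_mult)
  also have "\<dots> \<le> (\<Sum>l<d. ?c * \<beta> + (if l = j then \<beta> - ?c * \<beta> else 0) + (if l = b then ?c - ?c * \<beta> else 0))"
  proof (rule sum_mono)
    fix l assume l: "l \<in> {..<d}"
    show "cmod (?H $$ (j,l)) * cmod (?Q $$ (l,b)) \<le> ?c * \<beta> + (if l = j then \<beta> - ?c * \<beta> else 0) + (if l = b then ?c - ?c * \<beta> else 0)"
    proof (cases "l = j")
      case True
      have "cmod (?H $$ (j,l)) * cmod (?Q $$ (l,b)) \<le> 1 * \<beta>"
        using True Hf_diag[OF assms(1) D1 D2, of j] IH[of j b] Suc.prems by (intro mult_mono) auto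
      thus ?thesis using True Suc.prems by simp
    next
      case False
      note F = False
      show ?thesis
      proof (cases "l = b")
        case True
        have "cmod (?H $$ (j,l)) * cmod (?Q $$ (l,b)) \<le> ?c * 1"
          using True Hf_off[OF assms(1) D1 D2, of j b] unitary_entry_le1[OF Qu, of b b] Suc.prems c0
          by (intro mult_mono) auto
        thus ?thesis using True F by simp
      next
        case False
        have "cmod (?H $$ (j,l)) * cmod (?Q $$ (l,b)) \<le> ?c * \<beta>"
          using False F Hf_off[OF assms(1) D1 D2, of j l] IH[of l b] Suc.prems c0 l
          by (intro mult_mono) auto
        thus ?thesis using False F by simp
      qed
    qed
  qed
  also have "\<dots> = real d * (?c * \<beta>) + (\<beta> - ?c * \<beta>) + (?c - ?c * \<beta>)"
    using Suc.prems by (simp add: sum.distrib)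
  also have "\<dots> = (?x ^ Suc k - 1) / (real d - 2)"
    unfolding \<beta>_def using alg_step[OF d2, of ?c "?x ^ k"] by simp
  finally show ?case .
qed

lemma alt_prod_split: assumes "unitary_mat d U" "\<forall>i\<in>{1..2*(m+k)}. diag_unitary_mat d (D i)"
  shows "alt_prod d U D (m + k) = alt_prod d U (\<lambda>i. D (i + 2*k)) m * alt_prod d U D k"
  using assms(2)
proof (induction m)
  case 0
  have "unitary_mat d (alt_prod d U D k)" using alt_prod_unitary[OF assms(1)] 0 by auto
  hence "alt_prod d U D k \<in> carrier_mat d d" by (rule unitary_carrier)
  thus ?case by (simp add: left_mult_one_mat)
next
  case (Suc m)
  let ?D' = "\<lambda>i. D (i + 2*k)"
  have hQ: "\<forall>i\<in>{1..2*k}. diag_unitary_mat d (D i)" using Suc.prems by auto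
  have hP: "\<forall>i\<in>{1..2*m}. diag_unitary_mat d (?D' i)" using Suc.prems by auto
  have IH: "alt_prod d U D (m + k) = alt_prod d U ?D' m * alt_prod d U D k" using Suc by auto
  have e1: "D (2 * (m + k) + 1) = ?D' (2*m+1)" "D (2 * (m + k) + 2) = ?D' (2*m+2)"
    by (simp_all add: algebra_simps)
  have D1: "diag_unitary_mat d (?D' (2*m+1))" and D2: "diag_unitary_mat d (?D' (2*m+2))"
    using Suc.prems by auto
  have H: "Hf U (?D' (2*m+1)) (?D' (2*m+2)) \<in> carrier_mat d d"
    using Hf_unitary[OF assms(1) D1 D2] unitary_carrier by auto
  have P: "alt_prod d U ?D' m \<in> carrier_mat d d" using alt_prod_unitary[OF assms(1) hP] unitary_carrier by auto
  have Q: "alt_prod d U D k \<in> carrier_mat d d" using alt_prod_unitary[OF assms(1) hQ] unitary_carrier by auto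
  have "alt_prod d U D (Suc m + k) = Hf U (?D' (2*m+1)) (?D' (2*m+2)) * alt_prod d U (\<lambda>i. D (i + 2*k)) m * alt_prod d U D k"
    using IH e1 alt_prod_Suc'[of d U D "m+k"] assoc_mult_mat[OF H P Q] by simp
  thus ?case using alt_prod_Suc'[of d U ?D' m] by simp
qed

definition swapm :: "nat \<Rightarrow> complex mat" where
  "swapm d = mat d d (\<lambda>(i,j). if i = (if j = 0 then 1 else if j = 1 then 0 else j) then 1 else 0)"

lemma swapm_unitary: assumes "d \<ge> 2" shows "unitary_mat d (swapm d)"
proof -
  let ?s = "\<lambda>j::nat. if j = 0 then 1 else if j = 1 then 0 else j"
  have C: "swapm d \<in> carrier_mat d d" unfolding swapm_def by auto
  have "mat_adjoint (swapm d) * swapm d = 1\<^sub>m d"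
  proof (rule eq_matI)
    fix i j assume i: "i < dim_row (1\<^sub>m d)" and j: "j < dim_col (1\<^sub>m d)"
    have i': "i < d" and j': "j < d" using i j by auto
    have "(mat_adjoint (swapm d) * swapm d) $$ (i,j) = (\<Sum>l<d. mat_adjoint (swapm d) $$ (i,l) * swapm d $$ (l,j))"
      by (rule mult_entry[of _ d d]) (use C i' j' in auto)
    also have "\<dots> = (\<Sum>l<d. if l = ?s i then (if ?s i = ?s j then 1 else 0) else 0)"
      by (rule sum.cong) (use C i' j' in \<open>auto simp: swapm_def\<close>)
    also have "\<dots> = (if ?s i = ?s j then 1 else 0)" using i' assms by auto
    also have "\<dots> = 1\<^sub>m d $$ (i,j)" using i' j' by auto
    finally show "(mat_adjoint (swapm d) * swapm d) $$ (i,j) = 1\<^sub>m d $$ (i,j)" .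
  qed (use C in auto)
  thus ?thesis using C unfolding unitary_mat_def by auto
qed

lemma swapm_10: assumes "d \<ge> 2" shows "swapm d $$ (1,0) = 1"
  using assms unfolding swapm_def by auto

lemma final_ineq: fixes n c :: real and m k :: nat
  assumes n: "n \<ge> 2" and c: "c \<ge> 0" and km: "k \<le> m"
    and H: "1 \<le> ((((n-1)*c+1)^m - 1)/(n-1))\<^sup>2 + n * ((((n-1)*c+1)^k - 1)/(n-1))\<^sup>2"
  shows "n \<le> ((n-1)*c+1)^(m+k)"
proof (rule ccontr)
  define x where "x = (n-1)*c+1"
  define a where "a = x^m"
  define b where "b = x^k"
  assume "\<not> n \<le> ((n-1)*c+1)^(m+k)"
  hence ab: "a * b < n" unfolding a_def b_def x_def by (simp add: power_add)
  have x1: "x \<ge> 1" unfolding x_def using n c by simp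
  have b1: "b \<ge> 1" unfolding b_def using x1 by (simp add: one_le_power)
  have ba: "b \<le> a" unfolding a_def b_def using x1 km by (simp add: power_increasing)
  have bb: "b*b \<le> a*b" using ba b1 by (simp add: mult_right_mono)
  hence bn: "b*b < n" using ab by linarith
  have "b * 1 \<le> b * b" using b1 by (intro mult_left_mono) auto
  hence bn': "b \<le> n" using bn by linarith
  have h2: "(b*(a-1))\<^sup>2 < (n-b)\<^sup>2"
  proof -
    have "0 \<le> b*(a-1)" using b1 ba by simp
    moreover have "b*(a-1) < n - b" using ab by (simp add: algebra_simps)
    ultimately show ?thesis by (simp add: power_strict_mono)
  qed
  have h3: "(n-b)\<^sup>2 + n*(b*(b-1))\<^sup>2 \<le> ((n-1)*b)\<^sup>2"
  proof -
    have e: "((n-1)*b)\<^sup>2 - ((n-b)\<^sup>2 + n*(b*(b-1))\<^sup>2) = n*(b-1)*((n-2)*b + n - (b*b)*(b-1))"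
      by (simp add: algebra_simps power2_eq_square)
    have "(b*b)*(b-1) \<le> n*(b-1)" using bn b1 by (simp add: mult_right_mono)
    hence "(n-2)*b + n - (b*b)*(b-1) \<ge> (n-2)*b + n - n*(b-1)" by linarith
    moreover have "(n-2)*b + n - n*(b-1) = 2*(n-b)" by (simp add: algebra_simps)
    ultimately have "(n-2)*b + n - (b*b)*(b-1) \<ge> 2*(n-b)" by simp
    moreover have "2*(n-b) \<ge> 0" using bn' by simp
    ultimately have "(n-2)*b + n - (b*b)*(b-1) \<ge> 0" by (rule order.trans[rotated])
    hence "n*(b-1)*((n-2)*b + n - (b*b)*(b-1)) \<ge> 0" using n b1 by simp
    thus ?thesis using e by linarith
  qed
  have n1: "n - 1 > 0" using n by simp
  have H': "(n-1)\<^sup>2 \<le> (a-1)\<^sup>2 + n*(b-1)\<^sup>2"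
  proof -
    have "1 \<le> ((a-1)/(n-1))\<^sup>2 + n*((b-1)/(n-1))\<^sup>2" using H unfolding a_def b_def x_def .
    also have "\<dots> = ((a-1)\<^sup>2 + n*(b-1)\<^sup>2) / (n-1)\<^sup>2" by (simp add: power_divide add_divide_distrib)
    finally show ?thesis using n1 by (simp add: le_divide_eq)
  qed
  have "((n-1)*b)\<^sup>2 \<le> b\<^sup>2 * ((a-1)\<^sup>2 + n*(b-1)\<^sup>2)"
    using mult_left_mono[OF H', of "b\<^sup>2"] by (simp add: power_mult_distrib mult.commute)
  also have "\<dots> = (b*(a-1))\<^sup>2 + n*(b*(b-1))\<^sup>2" by (simp add: algebra_simps power2_eq_square)
  finally show False using h2 h3 by linarith
qed

theorem proposition12:
  fixes d M :: nat and U :: "complex mat"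
  assumes "d \<ge> 3"
    and "unitary_mat d U"
    and "\<forall>V. unitary_mat d V \<longrightarrow>
           (\<exists>D. (\<forall>i\<in>{1..2*M}. diag_unitary_mat d (D i)) \<and> V = alt_prod d U D M)"
  shows "real (2 * M) \<ge> 2 * ln (real d - 1) / ln ((real d - 2) * c_U d U + 1)"
proof -
  have d2: "d \<ge> 2" using assms(1) by simp
  obtain D where D: "\<forall>i\<in>{1..2*M}. diag_unitary_mat d (D i)" and V: "swapm d = alt_prod d U D M"
    using assms(3) swapm_unitary[OF d2] by blast
  define k where "k = M div 2"
  define m where "m = M - k"
  have Mmk: "M = m + k" and km: "k \<le> m" unfolding m_def k_def by auto
  let ?c = "c_U d U"
  let ?x = "(real d - 2) * ?c + 1"
  define P where "P = alt_prod d U (\<lambda>i. D (i + 2*k)) m"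
  define Q where "Q = alt_prod d U D k"
  have hQ: "\<forall>i\<in>{1..2*k}. diag_unitary_mat d (D i)" using D Mmk by auto
  have hP: "\<forall>i\<in>{1..2*m}. diag_unitary_mat d (D (i + 2*k))" using D Mmk by auto
  have Pu: "unitary_mat d P" unfolding P_def using alt_prod_unitary[OF assms(2) hP] .
  have Qu: "unitary_mat d Q" unfolding Q_def using alt_prod_unitary[OF assms(2) hQ] .
  have VPQ: "swapm d = P * Q" unfolding P_def Q_def using V alt_prod_split[OF assms(2), of m k D] D Mmk by simp
  define p where "p = (\<lambda>l. cmod (P $$ (1,l)))"
  define q where "q = (\<lambda>l. cmod (Q $$ (l,0)))"
  have "(1::complex) = (P * Q) $$ (1,0)" using VPQ swapm_10[OF d2] by simp
  also have "\<dots> = (\<Sum>l<d. P $$ (1,l) * Q $$ (l,0))"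
    by (rule mult_entry[OF unitary_carrier[OF Pu] unitary_carrier[OF Qu]]) (use d2 in auto)
  finally have "1 \<le> (\<Sum>l<d. cmod (P $$ (1,l) * Q $$ (l,0)))" by (metis norm_one norm_sum)
  hence pq: "1 \<le> (\<Sum>l<d. p l * q l)" unfolding p_def q_def by (simp add: norm_mult)
  have p2: "(\<Sum>l<d. (p l)\<^sup>2) = 1" unfolding p_def using unitary_row[OF Pu] d2 by simp
  have q2: "(\<Sum>l<d. (q l)\<^sup>2) = 1" unfolding q_def using unitary_col[OF Qu] d2 by simp
  have "(\<Sum>l<d. (p l - q l)\<^sup>2) = (\<Sum>l<d. (p l)\<^sup>2) + (\<Sum>l<d. (q l)\<^sup>2) - 2 * (\<Sum>l<d. p l * q l)"
    by (simp add: power2_diff sum.distrib sum_subtractf sum_distrib_left mult.assoc)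
  hence "(\<Sum>l<d. (p l - q l)\<^sup>2) \<le> 0" using p2 q2 pq by linarith
  hence "(\<Sum>l<d. (p l - q l)\<^sup>2) = 0" by (meson order.antisym sum_nonneg zero_le_power2)
  hence peq: "\<And>l. l < d \<Longrightarrow> p l = q l" by (simp add: sum_nonneg_eq_0_iff)
  define bm where "bm = (?x ^ m - 1) / (real d - 2)"
  define bk where "bk = (?x ^ k - 1) / (real d - 2)"
  have "1 \<le> (\<Sum>l<d. bk\<^sup>2 + (if l = 0 then bm\<^sup>2 - bk\<^sup>2 else 0))"
    unfolding q2[symmetric]
  proof (rule sum_mono)
    fix l assume l: "l \<in> {..<d}"
    show "(q l)\<^sup>2 \<le> bk\<^sup>2 + (if l = 0 then bm\<^sup>2 - bk\<^sup>2 else 0)"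
    proof (cases "l = 0")
      case True
      have "q l = p 0" using peq[of 0] d2 True by simp
      also have "\<dots> \<le> bm" unfolding p_def P_def bm_def
        by (rule alt_prod_off[OF assms(2) hP assms(1)]) (use d2 in auto)
      finally show ?thesis using True by (simp add: q_def power_mono)
    next
      case False
      have "q l \<le> bk" unfolding q_def Q_def bk_def
        by (rule alt_prod_off[OF assms(2) hQ assms(1)]) (use d2 l False in auto)
      thus ?thesis using False by (simp add: q_def power_mono)
    qed
  qed
  also have "\<dots> = bm\<^sup>2 + (real d - 1) * bk\<^sup>2" using d2 by (simp add: sum.distrib algebra_simps)
  finally have H: "1 \<le> bm\<^sup>2 + (real d - 1) * bk\<^sup>2" .
  have c0: "0 \<le> ?c" using cU_nonneg[OF d2] .
  have e: "real d - 1 - 1 = real d - 2" by simp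
  have "real d - 1 \<le> ((real d - 1 - 1) * ?c + 1) ^ (m + k)"
    by (rule final_ineq[OF _ c0 km]) (use assms(1) H in \<open>simp_all add: bm_def bk_def e\<close>)
  hence xn: "real d - 1 \<le> ?x ^ M" using Mmk e by simp
  have n1: "real d - 1 > 1" using assms(1) by simp
  have lnpos: "ln (real d - 1) > 0" using n1 by simp
  have dd: "real d - 2 \<ge> 0" using assms(1) by simp
  have "(real d - 2) * ?c \<ge> 0" using dd c0 by simp
  hence x0: "?x > 0" by linarith
  have "ln (real d - 1) \<le> ln (?x ^ M)" using xn n1 x0 by simp
  also have "\<dots> = real M * ln ?x" using x0 by (simp add: ln_realpow)
  finally have L: "ln (real d - 1) \<le> real M * ln ?x" .
  have "ln ?x > 0"
  proof (rule ccontr)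
    assume "\<not> ln ?x > 0"
    hence "real M * ln ?x \<le> 0" by (simp add: mult_nonneg_nonpos)
    thus False using L lnpos by linarith
  qed
  hence "ln (real d - 1) / ln ?x \<le> real M" using L by (simp add: divide_le_eq)
  thus ?thesis by simp
qed

end
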